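(* Let $k$ be a positive-definite kernel on $\mathcal X$ and $l$ a positive-definite kernel on $\mathcal Y$ with $\sup_xk(x,x)\le\nu_k$ and $\sup_yl(y,y)\le\nu_l$. Then for $\delta\in(0,1)$, with probability at least $1-\delta$, $|\hat\sigma^2-\mathbb E\hat\sigma^2|\le6144\nu_k^2\nu_l^2\sqrt{\frac2n\log\frac2\delta}$.
   Context: $(X_1,Y_1),\dots,(X_n,Y_n)$, $n\ge4$, i.i.d. from $P_{xy}$. $K_{ab}=k(X_a,X_b)$, $L_{ab}=l(Y_a,Y_b)$, and for distinct indices $H_{ijqr}=\frac1{24}\sum_{(a,b,c,d)}K_{ab}(L_{ab}+L_{cd}-2L_{ac})$ over all $24$ orderings of $\{i,j,q,r\}$. With $(n)_k=n!/(n-k)!$, $\mathbf i^n_k$ the $k$-tuples of distinct elements of $\{1,\dots,n\}$, and $\mathbf i^n_3\setminus\{i\}$ those avoiding $i$: $\hat\eta=\frac1{(n)_4}\sum_{\mathbf i^n_4}H_{ijqr}$ and $\hat\sigma^2=16\Bigl(\frac1{(n)_4(n-1)_3}\sum_{(i,j,q,r)\in\mathbf i^n_4}\sum_{(b,c,d)\in\mathbf i^n_3\setminus\{i\}}H_{ijqr}H_{ibcd}-\hat\eta^2\Bigr)$. *)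

theory Defs
  imports "HOL-Probability.Probability"
begin

definition pd_kernel :: "('a \<Rightarrow> 'a \<Rightarrow> real) \<Rightarrow> bool" where
  "pd_kernel k \<longleftrightarrow> (\<forall>x y. k x y = k y x) \<and>
     (\<forall>(xs::'a list) (c::nat \<Rightarrow> real).
        0 \<le> (\<Sum>i<length xs. \<Sum>j<length xs. c i * c j * k (xs ! i) (xs ! j)))"

definition falling :: "nat \<Rightarrow> nat \<Rightarrow> real" where
  "falling n m = fact n / fact (n - m)"

definition dtuples :: "nat \<Rightarrow> nat set \<Rightarrow> nat list set" where
  "dtuples m A = {xs. length xs = m \<and> distinct xs \<and> set xs \<subseteq> A}"

text \<open>The kernel h of the HSIC U-statistic; Z is the sample (X_a, Y_a).\<close>
definition Hker :: "('x \<Rightarrow> 'x \<Rightarrow> real) \<Rightarrow> ('y \<Rightarrow> 'y \<Rightarrow> real) \<Rightarrow> (nat \<Rightarrow> 'x \<times> 'y)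
    \<Rightarrow> nat \<Rightarrow> nat \<Rightarrow> nat \<Rightarrow> nat \<Rightarrow> real" where
  "Hker k l Z i j q r =
     (let K = (\<lambda>a b. k (fst (Z a)) (fst (Z b)));
          L = (\<lambda>a b. l (snd (Z a)) (snd (Z b)))
      in (1/24) * (\<Sum>p\<in>dtuples 4 {i, j, q, r}.
            K (p!0) (p!1) * (L (p!0) (p!1) + L (p!2) (p!3) - 2 * L (p!0) (p!2))))"

definition eta_hat :: "('x \<Rightarrow> 'x \<Rightarrow> real) \<Rightarrow> ('y \<Rightarrow> 'y \<Rightarrow> real) \<Rightarrow> nat \<Rightarrow> (nat \<Rightarrow> 'x \<times> 'y) \<Rightarrow> real" where
  "eta_hat k l n Z = (1 / falling n 4) *
     (\<Sum>p\<in>dtuples 4 {1..n}. Hker k l Z (p!0) (p!1) (p!2) (p!3))"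

definition sigma2_hat :: "('x \<Rightarrow> 'x \<Rightarrow> real) \<Rightarrow> ('y \<Rightarrow> 'y \<Rightarrow> real) \<Rightarrow> nat \<Rightarrow> (nat \<Rightarrow> 'x \<times> 'y) \<Rightarrow> real" where
  "sigma2_hat k l n Z = 16 *
     ((1 / (falling n 4 * falling (n - 1) 3)) *
        (\<Sum>p\<in>dtuples 4 {1..n}. \<Sum>t\<in>dtuples 3 ({1..n} - {p!0}).
            Hker k l Z (p!0) (p!1) (p!2) (p!3) * Hker k l Z (p!0) (t!0) (t!1) (t!2))
      - (eta_hat k l n Z)\<^sup>2)"

end

theory Submission
  imports Defs
begin

lemma card_dt: "finite B \<Longrightarrow> k \<le> card B \<Longrightarrow> card (dtuples k B) = \<Prod>{card B - k + 1..card B}"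
  unfolding dtuples_def by (rule card_lists_distinct_length_eq)

lemma finite_dt: "finite B \<Longrightarrow> finite (dtuples k B)"
  unfolding dtuples_def by (rule finite_subset[OF _ finite_lists_length_eq[of B k]]) auto

lemma prod4: "4 \<le> b \<Longrightarrow> \<Prod>{b - 4 + 1..b} = b*(b-1)*(b-2)*(b-(3::nat))"
proof -
  assume "4 \<le> b" then obtain m where m: "b = m + 4" by (metis add.commute le_Suc_ex)
  have e: "\<Prod>{m+1..m+(4::nat)} = (m+4)*(m+3)*(m+2)*(m+1)" by (simp add: prod.atLeast_Suc_atMost numeral_eq_Suc algebra_simps)
  have s: "{b - 4 + 1..b} = {m+1..m+4}" using m by simp
  have r1: "b-1 = m+3" "b-2 = m+2" "b-3 = m+1" using m by auto
  have r: "b * (b-1) * (b-2) * (b-3) = (m+4)*(m+3)*(m+2)*(m+1)" unfolding r1 unfolding m ..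
  show ?thesis unfolding s r e ..
qed

lemma prod3: "3 \<le> b \<Longrightarrow> \<Prod>{b - 3 + 1..b} = b*(b-1)*(b-(2::nat))"
proof -
  assume "3 \<le> b" then obtain m where m: "b = m + 3" by (metis add.commute le_Suc_ex)
  have e: "\<Prod>{m+1..m+(3::nat)} = (m+3)*(m+2)*(m+1)" by (simp add: prod.atLeast_Suc_atMost numeral_eq_Suc algebra_simps)
  have s: "{b - 3 + 1..b} = {m+1..m+3}" using m by simp
  have r1: "b-1 = m+2" "b-2 = m+1" using m by auto
  have r: "b * (b-1) * (b-2) = (m+3)*(m+2)*(m+1)" unfolding r1 unfolding m ..
  show ?thesis unfolding s r e ..
qed

lemma prod2: "2 \<le> b \<Longrightarrow> \<Prod>{b - 2 + 1..b} = b*(b-(1::nat))"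
proof -
  assume "2 \<le> b" then obtain m where m: "b = m + 2" by (metis add.commute le_Suc_ex)
  have e: "\<Prod>{m+1..m+(2::nat)} = (m+2)*(m+1)" by (simp add: prod.atLeast_Suc_atMost numeral_eq_Suc algebra_simps)
  have s: "{b - 2 + 1..b} = {m+1..m+2}" using m by simp
  have r1: "b-1 = m+1" using m by auto
  have r: "b * (b-1) = (m+2)*(m+1)" unfolding r1 unfolding m ..
  show ?thesis unfolding s r e ..
qed

lemma falling4: "4 \<le> n \<Longrightarrow> falling n 4 = real n * (real n - 1) * (real n - 2) * (real n - 3)"
proof -
  assume "4 \<le> n" then obtain m where m: "n = m + 4" by (metis add.commute le_Suc_ex)
  show ?thesis unfolding falling_def m by (simp add: numeral_eq_Suc fact_Suc field_simps)
qed

lemma falling3: "4 \<le> n \<Longrightarrow> falling (n - 1) 3 = (real n - 1) * (real n - 2) * (real n - 3)"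
proof -
  assume "4 \<le> n" then obtain m where m: "n = m + 4" by (metis add.commute le_Suc_ex)
  show ?thesis unfolding falling_def m by (simp add: numeral_eq_Suc fact_Suc field_simps)
qed

lemma card_ins: "finite B \<Longrightarrow> card {t\<in>dtuples k B. m \<in> set t} \<le> k * card (dtuples (k - 1) (B - {m}))"
proof -
  assume fB: "finite B"
  let ?F = "\<lambda>(j, u). take j u @ m # drop j u"
  have "{t\<in>dtuples k B. m \<in> set t} \<subseteq> ?F ` ({..<k} \<times> dtuples (k - 1) (B - {m}))"
  proof
    fix t assume t: "t \<in> {t\<in>dtuples k B. m \<in> set t}"
    then have "m \<in> set t" by simp
    then obtain ys zs where yz: "t = ys @ m # zs" by (blast dest: split_list)
    have "(length ys, ys @ zs) \<in> {..<k} \<times> dtuples (k - 1) (B - {m})"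
    proof -
      from t have tl: "length t = k" "distinct t" "set t \<subseteq> B" by (auto simp: dtuples_def)
      have "length ys < k" using tl(1) yz by simp
      moreover have "length (ys@zs) = k - 1" using tl(1) yz by simp
      moreover have "distinct (ys@zs)" using tl(2) yz by simp
      moreover have "set (ys@zs) \<subseteq> B - {m}" using tl(2,3) yz by auto
      ultimately show ?thesis by (simp add: dtuples_def)
    qed
    moreover have "t = ?F (length ys, ys @ zs)" using yz by simp
    ultimately show "t \<in> ?F ` ({..<k} \<times> dtuples (k - 1) (B - {m}))" by blast
  qed
  then have "card {t\<in>dtuples k B. m \<in> set t} \<le> card (?F ` ({..<k} \<times> dtuples (k - 1) (B - {m})))"
    by (intro card_mono finite_imageI finite_cartesian_product finite_dt finite_lessThan fB finite_Diff)
  also have "\<dots> \<le> card ({..<k} \<times> dtuples (k - 1) (B - {m}))" by (rule card_image_le)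
      (intro finite_cartesian_product finite_dt finite_lessThan fB finite_Diff)
  also have "\<dots> = k * card (dtuples (k - 1) (B - {m}))" by (simp add: card_cartesian_product)
  finally show ?thesis .
qed

lemma pd_diag: "pd_kernel k \<Longrightarrow> 0 \<le> k x x"
proof -
  assume "pd_kernel k"
  then have H: "\<And>xs c. 0 \<le> (\<Sum>i<length xs. \<Sum>j<length xs. c i * c j * k (xs ! i) (xs ! j))"
    unfolding pd_kernel_def by blast
  have "0 \<le> (\<Sum>i<length [x]. \<Sum>j<length [x]. (\<lambda>_. 1::real) i * (\<lambda>_. 1) j * k ([x] ! i) ([x] ! j))"
    by (rule H)
  then show ?thesis by simp
qed

lemma pd_bound: assumes "pd_kernel k" "\<forall>x. k x x \<le> \<nu>" shows "\<bar>k x y\<bar> \<le> \<nu>"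
proof -
  have sym: "k y x = k x y" using assms(1) unfolding pd_kernel_def by auto
  have gen: "0 \<le> k x x + 2 * s * k x y + s * s * k y y" for s :: real
  proof -
    have H: "\<And>xs c. 0 \<le> (\<Sum>i<length xs. \<Sum>j<length xs. c i * c j * k (xs ! i) (xs ! j))"
      using assms(1) unfolding pd_kernel_def by blast
    have "0 \<le> (\<Sum>i<length [x,y]. \<Sum>j<length [x,y]. (\<lambda>i. if i = 0 then 1 else s) i * (\<lambda>i. if i = 0 then 1 else s) j * k ([x,y] ! i) ([x,y] ! j))"
      by (rule H)
    then show ?thesis by (simp add: numeral_2_eq_2 sym algebra_simps)
  qed
  have "0 \<le> k x x + 2 * k x y + k y y" using gen[of 1] by simp
  moreover have "0 \<le> k x x - 2 * k x y + k y y" using gen[of "-1"] by simp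
  moreover have "k x x \<le> \<nu>" "k y y \<le> \<nu>" using assms(2) by auto
  ultimately show ?thesis by (simp add: abs_le_iff)
qed

lemma card_dt4: "distinct [i,j,q,r] \<Longrightarrow> card (dtuples 4 {i,j,q,r}) = 24"
proof -
  assume d: "distinct [i,j,q,r]"
  then have c: "card {i,j,q,r} = 4" by simp
  have "card (dtuples 4 {i,j,q,r}) = \<Prod>{card {i,j,q,r} - 4 + 1..card {i,j,q,r}}"
    by (rule card_dt) (use c in auto)
  also have "\<dots> = 24" unfolding c by (simp add: prod.atLeast_Suc_atMost numeral_eq_Suc)
  finally show ?thesis .
qed

lemma dt_nth: "p \<in> dtuples 4 A \<Longrightarrow> a < 4 \<Longrightarrow> p ! a \<in> A"
  unfolding dtuples_def by auto

lemma Hker_bound: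
  assumes "pd_kernel k" "pd_kernel l" "\<forall>x. k x x \<le> \<nu>k" "\<forall>y. l y y \<le> \<nu>l" "distinct [i,j,q,r]"
  shows "\<bar>Hker k l Z i j q r\<bar> \<le> 4 * \<nu>k * \<nu>l"
proof -
  have kb: "\<bar>k x x'\<bar> \<le> \<nu>k" for x x' by (rule pd_bound[OF assms(1,3)])
  have lb: "\<bar>l y y'\<bar> \<le> \<nu>l" for y y' by (rule pd_bound[OF assms(2,4)])
  have nl: "0 \<le> \<nu>l" using lb[of undefined undefined] by simp
  have nk: "0 \<le> \<nu>k" using kb[of undefined undefined] by simp
  have tb: "\<bar>k a b * (l c d + l e f - 2 * l g h)\<bar> \<le> \<nu>k * (4 * \<nu>l)" for a b c d e f g h
  proof -
    have "\<bar>l c d + l e f - 2 * l g h\<bar> \<le> 4 * \<nu>l" using lb[of c d] lb[of e f] lb[of g h] by (simp add: abs_le_iff)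
    then show ?thesis unfolding abs_mult by (intro mult_mono kb) (auto simp: nl nk)
  qed
  have "\<bar>Hker k l Z i j q r\<bar> \<le> (1/24) * (\<Sum>p\<in>dtuples 4 {i,j,q,r}. \<nu>k * (4 * \<nu>l))"
    unfolding Hker_def Let_def abs_mult
    by (simp only: abs_divide abs_one abs_numeral, intro mult_left_mono order.trans[OF sum_abs] sum_mono tb) auto
  also have "\<dots> = 4 * \<nu>k * \<nu>l" using card_dt4[OF assms(5)] by simp
  finally show ?thesis .
qed

lemma Hker_local:
  assumes "m \<notin> {i,j,q,r}"
  shows "Hker k l (Z(m:=y)) i j q r = Hker k l Z i j q r"
  unfolding Hker_def Let_def
proof (intro arg_cong[where f="\<lambda>x. (1/24) * x"] sum.cong refl)
  fix p assume p: "p \<in> dtuples 4 {i,j,q,r}"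
  have "p ! a \<noteq> m" if "a < 4" for a using dt_nth[OF p that] assms by auto
  from this[of 0] this[of 1] this[of 2] this[of 3] show
    "k (fst ((Z(m := y)) (p ! 0))) (fst ((Z(m := y)) (p ! 1))) *
         (l (snd ((Z(m := y)) (p ! 0))) (snd ((Z(m := y)) (p ! 1))) + l (snd ((Z(m := y)) (p ! 2))) (snd ((Z(m := y)) (p ! 3))) -
          2 * l (snd ((Z(m := y)) (p ! 0))) (snd ((Z(m := y)) (p ! 2)))) =
         k (fst (Z (p ! 0))) (fst (Z (p ! 1))) * (l (snd (Z (p ! 0))) (snd (Z (p ! 1))) + l (snd (Z (p ! 2))) (snd (Z (p ! 3))) - 2 * l (snd (Z (p ! 0))) (snd (Z (p ! 2))))"
    by simp
qed

lemma mcd_mgf: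
  fixes M :: "'a measure" and f :: "('i \<Rightarrow> 'a) \<Rightarrow> real" and I :: "'i set"
  assumes M: "prob_space M" and fin: "finite I" and l: "l > 0"
  and meas: "f \<in> borel_measurable (PiM I (\<lambda>_. M))"
  and bnd: "\<And>x. x \<in> space (PiM I (\<lambda>_. M)) \<Longrightarrow> \<bar>f x\<bar> \<le> B"
  and bd: "\<And>x i y. x \<in> space (PiM I (\<lambda>_. M)) \<Longrightarrow> i \<in> I \<Longrightarrow> y \<in> space M \<Longrightarrow> \<bar>f x - f (x(i:=y))\<bar> \<le> c"
  shows "(\<integral>\<^sup>+x. ennreal (exp (l * (f x - (\<integral>x. f x \<partial>PiM I (\<lambda>_. M))))) \<partial>PiM I (\<lambda>_. M))
          \<le> ennreal (exp (l\<^sup>2 * c\<^sup>2 * card I / 8))"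
  using fin meas bnd bd
proof (induction I arbitrary: f B rule: finite_induct)
  case empty
  then show ?case
    by (simp add: PiM_empty nn_integral_count_space_finite lebesgue_integral_count_space_finite)
next
  case (insert i I)
  interpret MM: prob_space M by (rule M)
  interpret P: product_prob_space "\<lambda>_::'i. M"
    by (simp add: product_prob_space_def product_prob_space_axioms_def product_sigma_finite_def M prob_space_imp_sigma_finite)
  define N where "N = PiM I (\<lambda>_. M)"
  define N' where "N' = PiM (insert i I) (\<lambda>_. M)"
  interpret N: prob_space N unfolding N_def by (rule prob_space_PiM) (rule M)
  interpret N': prob_space N' unfolding N'_def by (rule prob_space_PiM) (rule M)
  note fmeas[measurable] = insert.prems(1)[folded N'_def]
  note fmeas2[measurable] = insert.prems(1)
  have upd[measurable]: "(\<lambda>z. (fst z)(i := snd z)) \<in> measurable (N \<Otimes>\<^sub>M M) N'"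
    unfolding N_def N'_def by (rule measurable_fun_upd[where J=I]) auto
  have updsp: "x(i:=y) \<in> space N'" if "x \<in> space N" "y \<in> space M" for x y
    using measurable_space[OF upd, of "(x,y)"] that by (simp add: space_pair_measure)
  have updsp2: "x(j:=z) \<in> space N" if "x \<in> space N" "z \<in> space M" "j \<in> I" for x z j
    using that unfolding N_def by (auto simp: space_PiM PiE_iff extensional_def)
  have fup[measurable]: "(\<lambda>(x,y). f (x(i:=y))) \<in> borel_measurable (N \<Otimes>\<^sub>M M)"
    using measurable_comp[OF upd fmeas] by (simp add: case_prod_beta' comp_def)
  define g where "g x = (\<integral>y. f (x(i:=y)) \<partial>M)" for x
  have gmeas[measurable]: "g \<in> borel_measurable N"
    unfolding g_def using sigma_finite_measure.borel_measurable_lebesgue_integral[OF prob_space_imp_sigma_finite[OF M], of "\<lambda>x y. f (x(i:=y))" N] fup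
    by (simp add: case_prod_beta')
  have fB: "\<bar>f z\<bar> \<le> B" if "z \<in> space N'" for z using insert.prems(2) that N'_def by auto
  have intM: "integrable M (\<lambda>y. f (x(i:=y)))" if "x \<in> space N" for x
    by (rule MM.integrable_const_bound[where B=B]) (use that updsp fB in \<open>auto\<close>)
  have gB: "\<bar>g x\<bar> \<le> B" if "x \<in> space N" for x
  proof -
    have "g x \<le> B" unfolding g_def
      by (rule MM.integral_le_const[OF intM[OF that]]) (rule AE_I2, use that updsp fB abs_le_iff in \<open>force\<close>)
    moreover have "-B \<le> g x" unfolding g_def
      by (rule MM.integral_ge_const[OF intM[OF that]]) (rule AE_I2, use that updsp fB abs_le_iff in \<open>force\<close>)
    ultimately show ?thesis by auto
  qed
  have gbd: "\<bar>g x - g (x(j:=z))\<bar> \<le> c" if "x \<in> space N" "j \<in> I" "z \<in> space M" for x j z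
  proof -
    have ji: "j \<noteq> i" using that insert.hyps by auto
    have "g x - g (x(j:=z)) = (\<integral>y. f (x(i:=y)) - f ((x(i:=y))(j:=z)) \<partial>M)"
      unfolding g_def using intM[OF that(1)] intM[OF updsp2[OF that(1,3,2)]] ji
      by (simp add: fun_upd_twist)
    also have "\<bar>\<dots>\<bar> \<le> c"
    proof -
      have bb: "\<bar>f (x(i:=y)) - f ((x(i:=y))(j:=z))\<bar> \<le> c" if "y \<in> space M" for y
        using insert.prems(3)[OF updsp[OF \<open>x \<in> space N\<close> that, unfolded N'_def]] \<open>j \<in> I\<close> \<open>z \<in> space M\<close> by blast
      have ii: "integrable M (\<lambda>y. f (x(i:=y)) - f ((x(i:=y))(j:=z)))"
        using intM[OF that(1)] intM[OF updsp2[OF that(1,3,2)]] ji by (simp add: fun_upd_twist)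
      have "(\<integral>y. f (x(i:=y)) - f ((x(i:=y))(j:=z)) \<partial>M) \<le> c"
        by (rule MM.integral_le_const[OF ii]) (rule AE_I2, use bb abs_le_iff in \<open>force\<close>)
      moreover have "-c \<le> (\<integral>y. f (x(i:=y)) - f ((x(i:=y))(j:=z)) \<partial>M)"
        by (rule MM.integral_ge_const[OF ii]) (rule AE_I2, use bb abs_le_iff in \<open>force\<close>)
      ultimately show ?thesis by auto
    qed
    finally show ?thesis .
  qed
  have IH: "(\<integral>\<^sup>+x. ennreal (exp (l * (g x - (\<integral>x. g x \<partial>N)))) \<partial>N) \<le> ennreal (exp (l\<^sup>2 * c\<^sup>2 * card I / 8))"
    using insert.IH[OF gmeas[unfolded N_def] gB[unfolded N_def] gbd[unfolded N_def]] unfolding N_def .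
  have intf: "integrable N' f"
    by (rule N'.integrable_const_bound[where B=B]) (use fB in auto)
  have Efg: "(\<integral>x. f x \<partial>N') = (\<integral>x. g x \<partial>N)"
    unfolding N'_def N_def g_def
    by (rule P.product_integral_insert) (use insert.hyps intf N'_def in auto)
  have hmeas[measurable]: "(\<lambda>y. f (x(i:=y))) \<in> borel_measurable M" if x: "x \<in> space N" for x
    using measurable_Pair2[OF fup x] by simp
  have inner: "(\<integral>\<^sup>+y. ennreal (exp (l * (f (x(i:=y)) - g x))) \<partial>M) \<le> ennreal (exp (l\<^sup>2 * c\<^sup>2 / 8))"
    if x: "x \<in> space N" for x
  proof -
    define h where "h y = f (x(i:=y))" for y
    define a where "a = Inf (h ` space M)"
    define b where "b = Sup (h ` space M)"
    have hB: "\<bar>h y\<bar> \<le> B" if "y \<in> space M" for y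
      unfolding h_def using fB updsp x that by blast
    have hd: "h y - h y' \<le> c" if "y \<in> space M" "y' \<in> space M" for y y'
    proof -
      have "\<bar>f (x(i:=y)) - f ((x(i:=y))(i:=y'))\<bar> \<le> c"
        using insert.prems(3)[OF updsp[OF x that(1), unfolded N'_def]] that(2) by blast
      then show ?thesis unfolding h_def by simp
    qed
    have ne: "h ` space M \<noteq> {}" using MM.not_empty by auto
    have bb: "bdd_below (h ` space M)" using hB by (intro bdd_belowI[where m="-B"]) (force simp: abs_le_iff)
    have ba: "bdd_above (h ` space M)" using hB by (intro bdd_aboveI[where M="B"]) (auto simp: abs_le_iff)
    have ab: "h y \<in> {a..b}" if "y \<in> space M" for y
      unfolding a_def b_def using that bb ba by (auto intro: cInf_lower cSup_upper)
    have bac: "b - a \<le> c"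
    proof -
      have "b \<le> a + c" unfolding b_def
      proof (rule cSup_least[OF ne])
        fix s assume "s \<in> h ` space M"
        then obtain y where y: "y \<in> space M" "s = h y" by auto
        have "s - c \<le> a" unfolding a_def
          by (rule cInf_greatest[OF ne]) (use y hd in force)
        then show "s \<le> a + c" by simp
      qed
      then show ?thesis by simp
    qed
    obtain y0 where "y0 \<in> space M" using MM.not_empty by auto
    then have ab0: "0 \<le> b - a" using ab[of y0] by simp
    interpret H: interval_bounded_random_variable M h a b
    proof unfold_locales
      show "h \<in> borel_measurable M" unfolding h_def by (rule hmeas[OF x])
      show "AE y in M. h y \<in> {a..b}" by (rule AE_I2) (rule ab)
    qed
    have "(\<integral>\<^sup>+y. ennreal (exp (l * (h y - (\<integral>y. h y \<partial>M)))) \<partial>M) \<le> ennreal (exp (l\<^sup>2 * (b - a)\<^sup>2 / 8))"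
      by (rule H.Hoeffdings_lemma_nn_integral[OF l])
    also have "\<dots> \<le> ennreal (exp (l\<^sup>2 * c\<^sup>2 / 8))"
      using power_mono[OF bac ab0, of 2] by (intro ennreal_leI) (simp add: mult_left_mono divide_right_mono)
    finally show ?thesis unfolding h_def g_def .
  qed
  have "(\<integral>\<^sup>+x. ennreal (exp (l * (f x - (\<integral>x. f x \<partial>N')))) \<partial>N')
      = (\<integral>\<^sup>+x. (\<integral>\<^sup>+y. ennreal (exp (l * (f (x(i:=y)) - (\<integral>x. f x \<partial>N')))) \<partial>M) \<partial>N)"
    unfolding N'_def N_def by (rule P.product_nn_integral_insert[OF insert.hyps(1,2)]) measurable
  also have "\<dots> \<le> (\<integral>\<^sup>+x. ennreal (exp (l * (g x - (\<integral>x. g x \<partial>N)))) * ennreal (exp (l\<^sup>2 * c\<^sup>2 / 8)) \<partial>N)"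
  proof (rule nn_integral_mono)
    fix x assume x: "x \<in> space N"
    have "(\<integral>\<^sup>+y. ennreal (exp (l * (f (x(i:=y)) - (\<integral>x. f x \<partial>N')))) \<partial>M)
        = (\<integral>\<^sup>+y. ennreal (exp (l * (g x - (\<integral>x. g x \<partial>N)))) * ennreal (exp (l * (f (x(i:=y)) - g x))) \<partial>M)"
    proof (rule nn_integral_cong)
      fix y
      have "exp (l * (f (x(i:=y)) - (\<integral>x. g x \<partial>N))) = exp (l * (g x - (\<integral>x. g x \<partial>N))) * exp (l * (f (x(i:=y)) - g x))"
        by (simp add: exp_add[symmetric] algebra_simps)
      then show "ennreal (exp (l * (f (x(i:=y)) - (\<integral>x. f x \<partial>N')))) = ennreal (exp (l * (g x - (\<integral>x. g x \<partial>N)))) * ennreal (exp (l * (f (x(i:=y)) - g x)))"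
        by (simp add: Efg ennreal_mult)
    qed
    also have "\<dots> = ennreal (exp (l * (g x - (\<integral>x. g x \<partial>N)))) * (\<integral>\<^sup>+y. ennreal (exp (l * (f (x(i:=y)) - g x))) \<partial>M)"
      by (rule nn_integral_cmult) (use hmeas[OF x] in measurable)
    also have "\<dots> \<le> ennreal (exp (l * (g x - (\<integral>x. g x \<partial>N)))) * ennreal (exp (l\<^sup>2 * c\<^sup>2 / 8))"
      by (rule mult_left_mono[OF inner[OF x]]) simp
    finally show "(\<integral>\<^sup>+y. ennreal (exp (l * (f (x(i:=y)) - (\<integral>x. f x \<partial>N')))) \<partial>M) \<le> ennreal (exp (l * (g x - (\<integral>x. g x \<partial>N)))) * ennreal (exp (l\<^sup>2 * c\<^sup>2 / 8))" .
  qed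
  also have "\<dots> = (\<integral>\<^sup>+x. ennreal (exp (l * (g x - (\<integral>x. g x \<partial>N)))) \<partial>N) * ennreal (exp (l\<^sup>2 * c\<^sup>2 / 8))"
    by (rule nn_integral_multc) measurable
  also have "\<dots> \<le> ennreal (exp (l\<^sup>2 * c\<^sup>2 * card I / 8)) * ennreal (exp (l\<^sup>2 * c\<^sup>2 / 8))"
    by (rule mult_right_mono[OF IH]) simp
  also have "\<dots> = ennreal (exp (l\<^sup>2 * c\<^sup>2 * card (insert i I) / 8))"
    using insert.hyps by (simp add: ennreal_mult[symmetric] exp_add[symmetric] field_simps)
  finally show ?case unfolding N'_def .
qed

lemma len4: "length p = 4 \<Longrightarrow> p = [p!0, p!1, p!2, p!3]"
  by (auto simp: numeral_eq_Suc length_Suc_conv)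

lemma len3: "length p = 3 \<Longrightarrow> p = [p!0, p!1, p!2]"
  by (auto simp: numeral_eq_Suc length_Suc_conv)

lemma D4_distinct: "p \<in> dtuples 4 A \<Longrightarrow> distinct [p!0, p!1, p!2, p!3] \<and> set p = {p!0, p!1, p!2, p!3}"
proof -
  assume p: "p \<in> dtuples 4 A"
  then have "p = [p!0, p!1, p!2, p!3]" "distinct p" using len4[of p] by (auto simp: dtuples_def)
  then show ?thesis by (metis list.set(1) list.set(2))
qed

lemma D3_distinct: "t \<in> dtuples 3 (A - {a}) \<Longrightarrow> distinct [a, t!0, t!1, t!2] \<and> set t = {t!0, t!1, t!2}"
proof -
  assume t: "t \<in> dtuples 3 (A - {a})"
  then have "t = [t!0, t!1, t!2]" "distinct t" "a \<notin> set t" using len3[of t] by (auto simp: dtuples_def)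
  then show ?thesis by (metis distinct.simps(2) list.set(1) list.set(2))
qed

lemma sigma_diff:
  fixes k :: "'x \<Rightarrow> 'x \<Rightarrow> real" and l :: "'y \<Rightarrow> 'y \<Rightarrow> real" and Hb :: real
  assumes n: "4 \<le> n" and Hb0: "0 \<le> Hb"
  and HB: "\<And>Z i j q r. distinct [i,j,q,r] \<Longrightarrow> \<bar>Hker k l Z i j q r\<bar> \<le> Hb"
  and HL: "\<And>Z m y i j q r. m \<notin> {i,j,q,r} \<Longrightarrow> Hker k l (Z(m:=y)) i j q r = Hker k l Z i j q r"
  and m: "m \<in> {1..n}"
  shows "\<bar>sigma2_hat k l n Z - sigma2_hat k l n (Z(m:=y))\<bar> \<le> 512 * Hb\<^sup>2 / n"
proof -
  define S where "S = {1..n}"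
  define D4 where "D4 = dtuples 4 S"
  define T where "T a = dtuples 3 (S - {a})" for a
  define Z' where "Z' = Z(m:=y)"
  define hp where "hp W p = Hker k l W (p!0) (p!1) (p!2) (p!3)" for W p
  define ht where "ht W p t = Hker k l W (p!0) (t!0) (t!1) (t!2)" for W p t
  define A where "A W = (\<Sum>p\<in>D4. \<Sum>t\<in>T (p!0). hp W p * ht W p t)" for W
  define E where "E W = (\<Sum>p\<in>D4. hp W p)" for W
  define a where "a = real n"
  define d3 where "d3 = (a - 1) * (a - 2) * (a - 3)"
  have a4: "4 \<le> a" using n by (simp add: a_def)
  have d3pos: "0 < d3" using a4 by (simp add: d3_def)
  have f4: "falling n 4 = a * d3" using falling4[OF n] by (simp add: a_def d3_def)
  have f3: "falling (n - 1) 3 = d3" using falling3[OF n] by (simp add: a_def d3_def)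
  have sig: "sigma2_hat k l n W = 16 * (1 / (a * d3 * d3) * A W - (1 / (a * d3) * E W)\<^sup>2)" for W
    unfolding sigma2_hat_def eta_hat_def f4 f3 A_def E_def hp_def ht_def D4_def T_def S_def ..
  have finS: "finite S" by (simp add: S_def)
  have cS: "card S = n" by (simp add: S_def)
  have finD4: "finite D4" unfolding D4_def by (rule finite_dt[OF finS])
  have finT: "finite (T b)" for b unfolding T_def by (rule finite_dt) (simp add: finS)
  have cD4: "real (card D4) = a * d3"
  proof -
    have "card D4 = n * (n - 1) * (n - 2) * (n - 3)" unfolding D4_def
      using card_dt[OF finS, of 4] prod4[of n] n cS by simp
    then show ?thesis using n by (simp add: a_def d3_def of_nat_diff)
  qed
  have cT: "real (card (T b)) = d3" if "b \<in> S" for b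
  proof -
    have c1: "card (S - {b}) = n - 1" using that cS finS by simp
    have "card (T b) = (n - 1) * (n - 1 - 1) * (n - 1 - 2)" unfolding T_def
      using card_dt[of "S - {b}" 3] prod3[of "n - 1"] n c1 finS by simp
    moreover have "n - 1 - 1 = n - 2" "n - 1 - 2 = n - 3" by auto
    ultimately have "card (T b) = (n - 1) * (n - 2) * (n - 3)" by simp
    then show ?thesis using n by (simp add: a_def d3_def of_nat_diff)
  qed
  have cP: "real (card (D4 \<inter> {p. m \<in> set p})) \<le> 4 * d3"
  proof -
    have "card (D4 \<inter> {p. m \<in> set p}) \<le> 4 * card (dtuples 3 (S - {m}))"
      using card_ins[OF finS, of 4 m] unfolding D4_def by (simp add: Int_def Collect_conj_eq[symmetric])
    moreover have "real (card (dtuples 3 (S - {m}))) = d3" using cT[of m] m by (simp add: T_def S_def)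
    ultimately show ?thesis by (metis of_nat_le_iff of_nat_mult of_nat_numeral)
  qed
  have cPT: "real (card (T b \<inter> {t. m \<in> set t})) \<le> 3 * ((a - 2) * (a - 3))" if "b \<in> S" for b
  proof (cases "m = b")
    case True
    then have "T b \<inter> {t. m \<in> set t} = {}" unfolding T_def dtuples_def by auto
    then show ?thesis using a4 by simp
  next
    case False
    have c2: "card (S - {b} - {m}) = n - 2" using that cS finS False m by (simp add: S_def card_Diff_subset)
    have "card (dtuples 2 (S - {b} - {m})) = (n - 2) * (n - 2 - 1)"
      using card_dt[of "S - {b} - {m}" 2] prod2[of "n - 2"] n c2 finS by simp
    moreover have "n - 2 - 1 = n - 3" by auto
    ultimately have "card (dtuples 2 (S - {b} - {m})) = (n - 2) * (n - 3)" by simp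
    moreover have "card (T b \<inter> {t. m \<in> set t}) \<le> 3 * card (dtuples 2 (S - {b} - {m}))"
      using card_ins[of "S - {b}" 3 m] finS unfolding T_def by (simp add: Int_def Collect_conj_eq[symmetric])
    ultimately have "card (T b \<inter> {t. m \<in> set t}) \<le> 3 * ((n - 2) * (n - 3))" by simp
    then have "real (card (T b \<inter> {t. m \<in> set t})) \<le> real (3 * ((n - 2) * (n - 3)))" by linarith
    then show ?thesis using n by (simp add: a_def of_nat_diff)
  qed
  have Dp: "distinct [p!0,p!1,p!2,p!3] \<and> set p = {p!0,p!1,p!2,p!3}" if "p \<in> D4" for p
    using D4_distinct that unfolding D4_def by blast
  have p0S: "p!0 \<in> S" if "p \<in> D4" for p using dt_nth[of p S 0] that unfolding D4_def by simp
  have Dt: "distinct [p!0, t!0, t!1, t!2] \<and> set t = {t!0, t!1, t!2}" if "t \<in> T (p!0)" for p t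
    using D3_distinct that unfolding T_def by blast
  have hpB: "\<bar>hp W p\<bar> \<le> Hb" if "p \<in> D4" for W p unfolding hp_def using HB Dp[OF that] by blast
  have htB: "\<bar>ht W p t\<bar> \<le> Hb" if "t \<in> T (p!0)" for W p t unfolding ht_def using HB Dt[OF that] by blast
  have hpL: "hp Z' p = hp Z p" if "p \<in> D4" "m \<notin> set p" for p
    unfolding hp_def Z'_def by (rule HL) (use Dp[OF that(1)] that(2) in auto)
  have htL: "ht Z' p t = ht Z p t" if "p \<in> D4" "t \<in> T (p!0)" "m \<notin> set p" "m \<notin> set t" for p t
    unfolding ht_def Z'_def by (rule HL) (use Dp[OF that(1)] Dt[OF that(2)] that(3,4) in auto)
  have dhp: "\<bar>hp Z p - hp Z' p\<bar> \<le> 2 * Hb * of_bool (m \<in> set p)" if "p \<in> D4" for p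
  proof (cases "m \<in> set p")
    case True
    then show ?thesis using hpB[OF that, of Z] hpB[OF that, of Z'] by simp
  next
    case False
    then show ?thesis using hpL[OF that False] by simp
  qed
  have dterm: "\<bar>hp Z p * ht Z p t - hp Z' p * ht Z' p t\<bar> \<le> 2 * Hb\<^sup>2 * (of_bool (m \<in> set p) + of_bool (m \<in> set t))"
    if "p \<in> D4" "t \<in> T (p!0)" for p t
  proof (cases "m \<in> set p \<or> m \<in> set t")
    case True
    have b1: "\<bar>hp W p * ht W p t\<bar> \<le> Hb\<^sup>2" for W
      unfolding abs_mult power2_eq_square by (intro mult_mono hpB[OF that(1)] htB[OF that(2)]) (auto simp: Hb0)
    have "\<bar>hp Z p * ht Z p t - hp Z' p * ht Z' p t\<bar> \<le> 2 * Hb\<^sup>2" using b1[of Z] b1[of Z'] by linarith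
    also have "\<dots> \<le> 2 * Hb\<^sup>2 * (of_bool (m \<in> set p) + of_bool (m \<in> set t))" using True by auto
    finally show ?thesis .
  next
    case False
    then show ?thesis using hpL[OF that(1)] htL[OF that] by simp
  qed
  have dE: "\<bar>E Z - E Z'\<bar> \<le> 8 * Hb * d3"
  proof -
    have "\<bar>E Z - E Z'\<bar> = \<bar>\<Sum>p\<in>D4. hp Z p - hp Z' p\<bar>" unfolding E_def by (simp add: sum_subtractf)
    also have "\<dots> \<le> (\<Sum>p\<in>D4. \<bar>hp Z p - hp Z' p\<bar>)" by (rule sum_abs)
    also have "\<dots> \<le> (\<Sum>p\<in>D4. 2 * Hb * of_bool (m \<in> set p))" by (intro sum_mono dhp)
    also have "\<dots> = 2 * Hb * real (card (D4 \<inter> {p. m \<in> set p}))"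
      by (simp add: sum_distrib_left[symmetric] finD4)
    also have "\<dots> \<le> 2 * Hb * (4 * d3)" by (intro mult_left_mono cP) (simp add: Hb0)
    finally show ?thesis by simp
  qed
  have dA: "\<bar>A Z - A Z'\<bar> \<le> 16 * Hb\<^sup>2 * d3 * d3"
  proof -
    have "\<bar>A Z - A Z'\<bar> = \<bar>\<Sum>p\<in>D4. \<Sum>t\<in>T (p!0). hp Z p * ht Z p t - hp Z' p * ht Z' p t\<bar>"
      unfolding A_def by (simp add: sum_subtractf)
    also have "\<dots> \<le> (\<Sum>p\<in>D4. \<Sum>t\<in>T (p!0). \<bar>hp Z p * ht Z p t - hp Z' p * ht Z' p t\<bar>)"
      by (rule order.trans[OF sum_abs]) (intro sum_mono sum_abs)
    also have "\<dots> \<le> (\<Sum>p\<in>D4. \<Sum>t\<in>T (p!0). 2 * Hb\<^sup>2 * (of_bool (m \<in> set p) + of_bool (m \<in> set t)))"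
      by (intro sum_mono dterm)
    also have "\<dots> = 2 * Hb\<^sup>2 * (\<Sum>p\<in>D4. of_bool (m \<in> set p) * real (card (T (p!0))) + real (card (T (p!0) \<inter> {t. m \<in> set t})))"
      by (simp add: sum_distrib_left[symmetric] sum.distrib finT finD4 algebra_simps)
    also have "\<dots> \<le> 2 * Hb\<^sup>2 * (\<Sum>p\<in>D4. of_bool (m \<in> set p) * d3 + 3 * ((a - 2) * (a - 3)))"
      by (intro mult_left_mono sum_mono add_mono) (auto simp: cT p0S cPT)
    also have "\<dots> = 2 * Hb\<^sup>2 * (d3 * real (card (D4 \<inter> {p. m \<in> set p})) + real (card D4) * (3 * ((a - 2) * (a - 3))))"
    proof -
      have "(\<Sum>p\<in>D4. of_bool (m \<in> set p) * d3 + 3 * ((a - 2) * (a - 3))) = d3 * real (card (D4 \<inter> {p. m \<in> set p})) + real (card D4) * (3 * ((a - 2) * (a - 3)))"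
        by (simp add: sum.distrib finD4 mult.commute)
      then show ?thesis by simp
    qed
    also have "\<dots> \<le> 2 * Hb\<^sup>2 * (d3 * (4 * d3) + (a * d3) * (3 * ((a - 2) * (a - 3))))"
    proof -
      have "d3 * real (card (D4 \<inter> {p. m \<in> set p})) \<le> d3 * (4 * d3)"
        using d3pos cP by (intro mult_left_mono) auto
      then show ?thesis using cD4 by (intro mult_left_mono) auto
    qed
    also have "\<dots> \<le> 16 * Hb\<^sup>2 * d3 * d3"
    proof -
      have q: "0 \<le> (a - 2) * (a - 3)" using a4 by simp
      have "3 * a * ((a - 2) * (a - 3)) \<le> (4 * (a - 1)) * ((a - 2) * (a - 3))"
        by (rule mult_right_mono[OF _ q]) (use a4 in simp)
      moreover have e4: "(4 * (a - 1)) * ((a - 2) * (a - 3)) = 4 * d3" unfolding d3_def by (simp only: mult_ac)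
      ultimately have H: "3 * a * ((a - 2) * (a - 3)) \<le> 4 * d3" by linarith
      have "(a * d3) * (3 * ((a - 2) * (a - 3))) = d3 * (3 * a * ((a - 2) * (a - 3)))" by (simp add: mult_ac)
      also have "\<dots> \<le> d3 * (4 * d3)" by (rule mult_left_mono[OF H]) (use d3pos in simp)
      finally have "d3 * (4 * d3) + (a * d3) * (3 * ((a - 2) * (a - 3))) \<le> 8 * (d3 * d3)" by simp
      then have "2 * Hb\<^sup>2 * (d3 * (4 * d3) + (a * d3) * (3 * ((a - 2) * (a - 3)))) \<le> 2 * Hb\<^sup>2 * (8 * (d3 * d3))"
        by (rule mult_left_mono) simp
      also have "\<dots> = 16 * Hb\<^sup>2 * d3 * d3" by simp
      finally show ?thesis .
    qed
    finally show ?thesis .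
  qed
  have EB: "\<bar>E W\<bar> \<le> Hb * (a * d3)" for W
  proof -
    have "\<bar>E W\<bar> \<le> (\<Sum>p\<in>D4. \<bar>hp W p\<bar>)" unfolding E_def by (rule sum_abs)
    also have "\<dots> \<le> (\<Sum>p\<in>D4. Hb)" by (intro sum_mono hpB)
    also have "\<dots> = Hb * (a * d3)" using cD4 by simp
    finally show ?thesis .
  qed
  define X where "X = A Z - A Z'"
  define Y where "Y = E Z - E Z'"
  define U where "U = E Z + E Z'"
  have ad: "0 < a * d3" using d3pos a4 by simp
  have s1: "sigma2_hat k l n W = 16 * (A W / (a * d3 * d3) - (E W)\<^sup>2 / (a * d3)\<^sup>2)" for W
    unfolding sig by (simp add: power_divide)
  have YU: "Y * U = (E Z)\<^sup>2 - (E Z')\<^sup>2" unfolding Y_def U_def by (simp add: power2_eq_square algebra_simps)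
  have e1: "Y * U / (a * d3)\<^sup>2 = (E Z)\<^sup>2 / (a * d3)\<^sup>2 - (E Z')\<^sup>2 / (a * d3)\<^sup>2"
    unfolding YU by (rule diff_divide_distrib)
  have e2: "X / (a * d3 * d3) = A Z / (a * d3 * d3) - A Z' / (a * d3 * d3)"
    unfolding X_def by (rule diff_divide_distrib)
  have eq: "sigma2_hat k l n Z - sigma2_hat k l n Z' = 16 * (X / (a * d3 * d3) - Y * U / (a * d3)\<^sup>2)"
    unfolding e1 e2 s1 by (simp only: right_diff_distrib)
  have den: "0 < a * d3 * d3" using ad d3pos by simp
  have a0: "a \<noteq> 0" using a4 by simp
  have d0: "d3 * d3 \<noteq> 0" using d3pos by simp
  have b1: "\<bar>X / (a * d3 * d3)\<bar> \<le> 16 * Hb\<^sup>2 / a"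
  proof -
    have "\<bar>X / (a * d3 * d3)\<bar> = \<bar>X\<bar> / (a * d3 * d3)" using den by (simp add: abs_divide)
    also have "\<dots> \<le> (16 * Hb\<^sup>2 * d3 * d3) / (a * d3 * d3)"
      by (rule divide_right_mono) (use dA X_def den in auto)
    also have "(16 * Hb\<^sup>2 * d3 * d3) / (a * d3 * d3) = ((16 * Hb\<^sup>2) * (d3 * d3)) / (a * (d3 * d3))"
      by (simp only: mult.assoc)
    also have "\<dots> = 16 * Hb\<^sup>2 / a" by (rule nonzero_mult_divide_mult_cancel_right[OF d0])
    finally show ?thesis .
  qed
  have b2: "\<bar>Y * U / (a * d3)\<^sup>2\<bar> \<le> 16 * Hb\<^sup>2 / a"
  proof -
    have U: "\<bar>U\<bar> \<le> 2 * Hb * (a * d3)" unfolding U_def using EB[of Z] EB[of Z'] by linarith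
    have Y: "\<bar>Y\<bar> \<le> 8 * Hb * d3" unfolding Y_def by (rule dE)
    have YU: "\<bar>Y * U\<bar> \<le> (8 * Hb * d3) * (2 * Hb * (a * d3))" unfolding abs_mult
      by (rule mult_mono[OF Y U]) (use Hb0 d3pos in auto)
    have pos2: "0 < (a * d3)\<^sup>2" using a0 d3pos by simp
    have "\<bar>Y * U / (a * d3)\<^sup>2\<bar> = \<bar>Y * U\<bar> / (a * d3)\<^sup>2" using pos2 by (simp add: abs_divide)
    also have "\<dots> \<le> (8 * Hb * d3) * (2 * Hb * (a * d3)) / (a * d3)\<^sup>2"
      by (rule divide_right_mono[OF YU]) (use pos2 in simp)
    also have "(8 * Hb * d3) * (2 * Hb * (a * d3)) = (16 * Hb\<^sup>2 / a) * (a * d3)\<^sup>2"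
      using a0 by (simp add: power2_eq_square)
    also have "(16 * Hb\<^sup>2 / a) * (a * d3)\<^sup>2 / (a * d3)\<^sup>2 = 16 * Hb\<^sup>2 / a"
      using pos2 by simp
    finally show ?thesis .
  qed
  have "\<bar>sigma2_hat k l n Z - sigma2_hat k l n Z'\<bar> = 16 * \<bar>X / (a * d3 * d3) - Y * U / (a * d3)\<^sup>2\<bar>"
    unfolding eq abs_mult by simp
  also have "\<dots> \<le> 16 * (\<bar>X / (a * d3 * d3)\<bar> + \<bar>Y * U / (a * d3)\<^sup>2\<bar>)"
    by (rule mult_left_mono[OF abs_triangle_ineq4]) simp
  also have "\<dots> \<le> 16 * (16 * Hb\<^sup>2 / a + 16 * Hb\<^sup>2 / a)"
    by (rule mult_left_mono[OF add_mono[OF b1 b2]]) simp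
  also have "\<dots> = 512 * Hb\<^sup>2 / n" by (simp add: a_def)
  finally show ?thesis unfolding Z'_def .
qed


lemma sigma_bnd:
  fixes k :: "'x \<Rightarrow> 'x \<Rightarrow> real" and l :: "'y \<Rightarrow> 'y \<Rightarrow> real" and Hb :: real
  assumes n: "4 \<le> n" and Hb0: "0 \<le> Hb"
  and HB: "\<And>Z i j q r. distinct [i,j,q,r] \<Longrightarrow> \<bar>Hker k l Z i j q r\<bar> \<le> Hb"
  shows "\<bar>sigma2_hat k l n Z\<bar> \<le> 32 * Hb\<^sup>2"
proof -
  define S where "S = {1..n}"
  define D4 where "D4 = dtuples 4 S"
  define T where "T a = dtuples 3 (S - {a})" for a
  define hp where "hp W p = Hker k l W (p!0) (p!1) (p!2) (p!3)" for W p
  define ht where "ht W p t = Hker k l W (p!0) (t!0) (t!1) (t!2)" for W p t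
  define A where "A W = (\<Sum>p\<in>D4. \<Sum>t\<in>T (p!0). hp W p * ht W p t)" for W
  define E where "E W = (\<Sum>p\<in>D4. hp W p)" for W
  define a where "a = real n"
  define d3 where "d3 = (a - 1) * (a - 2) * (a - 3)"
  have a4: "4 \<le> a" using n by (simp add: a_def)
  have d3pos: "0 < d3" using a4 by (simp add: d3_def)
  have f4: "falling n 4 = a * d3" using falling4[OF n] by (simp add: a_def d3_def)
  have f3: "falling (n - 1) 3 = d3" using falling3[OF n] by (simp add: a_def d3_def)
  have sig: "sigma2_hat k l n W = 16 * (1 / (a * d3 * d3) * A W - (1 / (a * d3) * E W)\<^sup>2)" for W
    unfolding sigma2_hat_def eta_hat_def f4 f3 A_def E_def hp_def ht_def D4_def T_def S_def ..
  have finS: "finite S" by (simp add: S_def)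
  have cS: "card S = n" by (simp add: S_def)
  have finD4: "finite D4" unfolding D4_def by (rule finite_dt[OF finS])
  have cD4: "real (card D4) = a * d3"
  proof -
    have "card D4 = n * (n - 1) * (n - 2) * (n - 3)" unfolding D4_def
      using card_dt[OF finS, of 4] prod4[of n] n cS by simp
    then show ?thesis using n by (simp add: a_def d3_def of_nat_diff)
  qed
  have cT: "real (card (T b)) = d3" if "b \<in> S" for b
  proof -
    have c1: "card (S - {b}) = n - 1" using that cS finS by simp
    have "card (T b) = (n - 1) * (n - 1 - 1) * (n - 1 - 2)" unfolding T_def
      using card_dt[of "S - {b}" 3] prod3[of "n - 1"] n c1 finS by simp
    moreover have "n - 1 - 1 = n - 2" "n - 1 - 2 = n - 3" by auto
    ultimately have "card (T b) = (n - 1) * (n - 2) * (n - 3)" by simp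
    then show ?thesis using n by (simp add: a_def d3_def of_nat_diff)
  qed
  have Dp: "distinct [p!0,p!1,p!2,p!3] \<and> set p = {p!0,p!1,p!2,p!3}" if "p \<in> D4" for p
    using D4_distinct that unfolding D4_def by blast
  have p0S: "p!0 \<in> S" if "p \<in> D4" for p using dt_nth[of p S 0] that unfolding D4_def by simp
  have Dt: "distinct [p!0, t!0, t!1, t!2] \<and> set t = {t!0, t!1, t!2}" if "t \<in> T (p!0)" for p t
    using D3_distinct that unfolding T_def by blast
  have hpB: "\<bar>hp W p\<bar> \<le> Hb" if "p \<in> D4" for W p unfolding hp_def using HB Dp[OF that] by blast
  have htB: "\<bar>ht W p t\<bar> \<le> Hb" if "t \<in> T (p!0)" for W p t unfolding ht_def using HB Dt[OF that] by blast
  have b1: "\<bar>hp W p * ht W p t\<bar> \<le> Hb\<^sup>2" if "p \<in> D4" "t \<in> T (p!0)" for W p t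
    unfolding abs_mult power2_eq_square by (intro mult_mono hpB[OF that(1)] htB[OF that(2)]) (auto simp: Hb0)
  have AB: "\<bar>A W\<bar> \<le> Hb\<^sup>2 * (a * d3 * d3)" for W
  proof -
    have "\<bar>A W\<bar> \<le> (\<Sum>p\<in>D4. \<Sum>t\<in>T (p!0). \<bar>hp W p * ht W p t\<bar>)"
      unfolding A_def by (rule order.trans[OF sum_abs]) (intro sum_mono sum_abs)
    also have "\<dots> \<le> (\<Sum>p\<in>D4. \<Sum>t\<in>T (p!0). Hb\<^sup>2)" by (intro sum_mono b1)
    also have "\<dots> = (\<Sum>p\<in>D4. Hb\<^sup>2 * d3)" by (intro sum.cong refl) (simp add: cT p0S)
    also have "\<dots> = Hb\<^sup>2 * (a * d3 * d3)" using cD4 by simp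
    finally show ?thesis .
  qed
  have EB: "\<bar>E W\<bar> \<le> Hb * (a * d3)" for W
  proof -
    have "\<bar>E W\<bar> \<le> (\<Sum>p\<in>D4. \<bar>hp W p\<bar>)" unfolding E_def by (rule sum_abs)
    also have "\<dots> \<le> (\<Sum>p\<in>D4. Hb)" by (intro sum_mono hpB)
    also have "\<dots> = Hb * (a * d3)" using cD4 by simp
    finally show ?thesis .
  qed
  have den: "0 < a * d3 * d3" "0 < a * d3" using d3pos a4 by auto
  have t1: "\<bar>1 / (a * d3 * d3) * A Z\<bar> \<le> Hb\<^sup>2"
  proof -
    have "\<bar>1 / (a * d3 * d3) * A Z\<bar> = \<bar>A Z\<bar> / (a * d3 * d3)" using den d3pos a4 by (simp add: abs_mult)
    also have "\<dots> \<le> Hb\<^sup>2 * (a * d3 * d3) / (a * d3 * d3)" by (rule divide_right_mono[OF AB]) (use den in simp)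
    also have "\<dots> = Hb\<^sup>2" using den d3pos a4 by simp
    finally show ?thesis .
  qed
  have t2: "(1 / (a * d3) * E Z)\<^sup>2 \<le> Hb\<^sup>2"
  proof -
    have "\<bar>1 / (a * d3) * E Z\<bar> = \<bar>E Z\<bar> / (a * d3)" using den d3pos a4 by (simp add: abs_mult)
    also have "\<dots> \<le> Hb * (a * d3) / (a * d3)" by (rule divide_right_mono[OF EB]) (use den in simp)
    also have "\<dots> = Hb" using den d3pos a4 by simp
    finally have "\<bar>1 / (a * d3) * E Z\<bar> \<le> Hb" .
    then have "\<bar>1 / (a * d3) * E Z\<bar>\<^sup>2 \<le> Hb\<^sup>2" by (rule power_mono) simp
    then show ?thesis by (simp only: power2_abs)
  qed
  have "\<bar>sigma2_hat k l n Z\<bar> = 16 * \<bar>1 / (a * d3 * d3) * A Z - (1 / (a * d3) * E Z)\<^sup>2\<bar>"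
    unfolding sig abs_mult by simp
  also have "\<dots> \<le> 16 * (Hb\<^sup>2 + Hb\<^sup>2)"
  proof (rule mult_left_mono)
    have "\<bar>1 / (a * d3 * d3) * A Z - (1 / (a * d3) * E Z)\<^sup>2\<bar> \<le> \<bar>1 / (a * d3 * d3) * A Z\<bar> + \<bar>(1 / (a * d3) * E Z)\<^sup>2\<bar>"
      by (rule abs_triangle_ineq4)
    also have "\<bar>(1 / (a * d3) * E Z)\<^sup>2\<bar> = (1 / (a * d3) * E Z)\<^sup>2" by simp
    finally show "\<bar>1 / (a * d3 * d3) * A Z - (1 / (a * d3) * E Z)\<^sup>2\<bar> \<le> Hb\<^sup>2 + Hb\<^sup>2" using t1 t2 by linarith
  qed simp
  finally show ?thesis by simp
qed

lemma mcd_one: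
  fixes M :: "'a measure" and f :: "('i \<Rightarrow> 'a) \<Rightarrow> real" and I :: "'i set" and c t B :: real
  assumes M: "prob_space M" and fin: "finite I" and ne: "I \<noteq> {}" and t: "0 < t" and c: "0 < c"
  and meas: "f \<in> borel_measurable (PiM I (\<lambda>_. M))"
  and bnd: "\<And>x. x \<in> space (PiM I (\<lambda>_. M)) \<Longrightarrow> \<bar>f x\<bar> \<le> B"
  and bd: "\<And>x i y. x \<in> space (PiM I (\<lambda>_. M)) \<Longrightarrow> i \<in> I \<Longrightarrow> y \<in> space M \<Longrightarrow> \<bar>f x - f (x(i:=y))\<bar> \<le> c"
  shows "measure (PiM I (\<lambda>_. M)) {x \<in> space (PiM I (\<lambda>_. M)). t \<le> f x - (\<integral>x. f x \<partial>PiM I (\<lambda>_. M))}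
          \<le> exp (-2 * t\<^sup>2 / (card I * c\<^sup>2))"
proof -
  define P where "P = PiM I (\<lambda>_. M)"
  interpret P: prob_space P unfolding P_def by (rule prob_space_PiM) (rule M)
  define \<mu> where "\<mu> = (\<integral>x. f x \<partial>P)"
  define N where "N = real (card I)"
  have N: "0 < N" using fin ne by (simp add: N_def card_gt_0_iff)
  define l where "l = 4 * t / (N * c\<^sup>2)"
  have l: "0 < l" using t c N by (simp add: l_def)
  note [measurable] = meas[folded P_def]
  have "emeasure P {x \<in> space P. t \<le> f x - \<mu>}
      \<le> ennreal (exp (- l * t)) * (\<integral>\<^sup>+x. ennreal (exp (l * (f x - \<mu>))) * indicator (space P) x \<partial>P)"
    by (rule Chernoff_ineq_nn_integral_ge[OF l]) measurable
  also have "(\<integral>\<^sup>+x. ennreal (exp (l * (f x - \<mu>))) * indicator (space P) x \<partial>P) = (\<integral>\<^sup>+x. ennreal (exp (l * (f x - \<mu>))) \<partial>P)"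
    by (rule nn_integral_cong) simp
  also have "\<dots> \<le> ennreal (exp (l\<^sup>2 * c\<^sup>2 * card I / 8))"
    unfolding \<mu>_def P_def by (rule mcd_mgf[OF M fin l meas bnd bd])
  finally have "emeasure P {x \<in> space P. t \<le> f x - \<mu>} \<le> ennreal (exp (- l * t)) * ennreal (exp (l\<^sup>2 * c\<^sup>2 * N / 8))"
    unfolding N_def by (simp add: mult_left_mono)
  also have "\<dots> = ennreal (exp (- l * t + l\<^sup>2 * c\<^sup>2 * N / 8))"
    by (simp only: ennreal_mult[symmetric] exp_ge_zero exp_add[symmetric])
  also have "- l * t + l\<^sup>2 * c\<^sup>2 * N / 8 = -2 * t\<^sup>2 / (N * c\<^sup>2)"
    using N c unfolding l_def by (simp add: field_simps power2_eq_square)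
  finally have "ennreal (measure P {x \<in> space P. t \<le> f x - \<mu>}) \<le> ennreal (exp (-2 * t\<^sup>2 / (N * c\<^sup>2)))"
    by (simp add: P.emeasure_eq_measure)
  then show ?thesis unfolding P_def \<mu>_def N_def
    by (simp add: ennreal_le_iff)
qed


lemma mcd_two:
  fixes M :: "'a measure" and f :: "('i \<Rightarrow> 'a) \<Rightarrow> real" and I :: "'i set" and c t B :: real
  assumes M: "prob_space M" and fin: "finite I" and ne: "I \<noteq> {}" and t: "0 < t" and c: "0 < c"
  and meas: "f \<in> borel_measurable (PiM I (\<lambda>_. M))"
  and bnd: "\<And>x. x \<in> space (PiM I (\<lambda>_. M)) \<Longrightarrow> \<bar>f x\<bar> \<le> B"
  and bd: "\<And>x i y. x \<in> space (PiM I (\<lambda>_. M)) \<Longrightarrow> i \<in> I \<Longrightarrow> y \<in> space M \<Longrightarrow> \<bar>f x - f (x(i:=y))\<bar> \<le> c"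
  shows "measure (PiM I (\<lambda>_. M)) {x \<in> space (PiM I (\<lambda>_. M)). t \<le> \<bar>f x - (\<integral>x. f x \<partial>PiM I (\<lambda>_. M))\<bar>}
          \<le> 2 * exp (-2 * t\<^sup>2 / (card I * c\<^sup>2))"
proof -
  define P where "P = PiM I (\<lambda>_. M)"
  interpret P: prob_space P unfolding P_def by (rule prob_space_PiM) (rule M)
  define \<mu> where "\<mu> = (\<integral>x. f x \<partial>P)"
  note [measurable] = meas[folded P_def]
  define S1 where "S1 = {x \<in> space P. t \<le> f x - \<mu>}"
  define S2 where "S2 = {x \<in> space P. t \<le> (- f x) - (\<integral>x. - f x \<partial>P)}"
  have m1: "measure P S1 \<le> exp (-2 * t\<^sup>2 / (card I * c\<^sup>2))"
    unfolding S1_def \<mu>_def P_def by (rule mcd_one[OF M fin ne t c meas bnd bd])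
  have meas2: "(\<lambda>x. - f x) \<in> borel_measurable (PiM I (\<lambda>_. M))" using meas by measurable
  have m2: "measure P S2 \<le> exp (-2 * t\<^sup>2 / (card I * c\<^sup>2))"
    unfolding S2_def P_def
  proof (rule mcd_one[OF M fin ne t c meas2])
    show "\<bar>- f x\<bar> \<le> B" if "x \<in> space (PiM I (\<lambda>_. M))" for x using bnd[OF that] by simp
    show "\<bar>- f x - - f (x(i := y))\<bar> \<le> c" if "x \<in> space (PiM I (\<lambda>_. M))" "i \<in> I" "y \<in> space M" for x i y
      using bd[OF that] by linarith
  qed
  have "{x \<in> space P. t \<le> \<bar>f x - \<mu>\<bar>} \<subseteq> S1 \<union> S2"
    unfolding S1_def S2_def by (auto simp: \<mu>_def abs_le_iff)
  have s1: "S1 \<in> sets P" unfolding S1_def by measurable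
  have s2: "S2 \<in> sets P" unfolding S2_def by measurable
  have "{x \<in> space P. t \<le> \<bar>f x - \<mu>\<bar>} \<subseteq> S1 \<union> S2"
    unfolding S1_def S2_def \<mu>_def by (auto simp: abs_if split: if_splits)
  then have "measure P {x \<in> space P. t \<le> \<bar>f x - \<mu>\<bar>} \<le> measure P (S1 \<union> S2)"
    using s1 s2 by (intro P.finite_measure_mono) auto
  also have "\<dots> \<le> measure P S1 + measure P S2" using s1 s2 by (rule measure_Un_le)
  also have "\<dots> \<le> 2 * exp (-2 * t\<^sup>2 / (card I * c\<^sup>2))" using m1 m2 by simp
  finally show ?thesis unfolding P_def \<mu>_def .
qed

lemma pair_meas:
  fixes M :: "'a measure" and I :: "nat set"
  assumes "a \<in> I" "b \<in> I"
  shows "(\<lambda>Z. (Z a, Z b)) \<in> measurable (PiM I (\<lambda>_. M)) (M \<Otimes>\<^sub>M M)"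
  using assms by (intro measurable_Pair measurable_component_singleton)

lemma Hker_meas:
  fixes M :: "('x \<times> 'y) measure" and k :: "'x \<Rightarrow> 'x \<Rightarrow> real" and l :: "'y \<Rightarrow> 'y \<Rightarrow> real"
  assumes K: "(\<lambda>(z, z'). k (fst z) (fst z')) \<in> borel_measurable (M \<Otimes>\<^sub>M M)"
    and L: "(\<lambda>(z, z'). l (snd z) (snd z')) \<in> borel_measurable (M \<Otimes>\<^sub>M M)"
    and sub: "{i,j,q,r} \<subseteq> I"
  shows "(\<lambda>Z. Hker k l Z i j q r) \<in> borel_measurable (PiM I (\<lambda>_. M))"
proof -
  have Km: "(\<lambda>Z. k (fst (Z a)) (fst (Z b))) \<in> borel_measurable (PiM I (\<lambda>_. M))" if "a \<in> I" "b \<in> I" for a b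
    using measurable_comp[OF pair_meas[OF that, of M] K] by (simp add: comp_def)
  have Lm: "(\<lambda>Z. l (snd (Z a)) (snd (Z b))) \<in> borel_measurable (PiM I (\<lambda>_. M))" if "a \<in> I" "b \<in> I" for a b
    using measurable_comp[OF pair_meas[OF that, of M] L] by (simp add: comp_def)
  have inI: "p ! a \<in> I" if "p \<in> dtuples 4 {i,j,q,r}" "a < 4" for p a
    using dt_nth[OF that] sub by auto
  show ?thesis
    unfolding Hker_def Let_def
    by (intro borel_measurable_times borel_measurable_const borel_measurable_sum borel_measurable_add
        borel_measurable_diff Km Lm inI) auto
qed

lemma sigma_meas:
  fixes M :: "('x \<times> 'y) measure" and k :: "'x \<Rightarrow> 'x \<Rightarrow> real" and l :: "'y \<Rightarrow> 'y \<Rightarrow> real"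
  assumes K: "(\<lambda>(z, z'). k (fst z) (fst z')) \<in> borel_measurable (M \<Otimes>\<^sub>M M)"
    and L: "(\<lambda>(z, z'). l (snd z) (snd z')) \<in> borel_measurable (M \<Otimes>\<^sub>M M)"
  shows "sigma2_hat k l n \<in> borel_measurable (PiM {1..n} (\<lambda>_. M))"
proof -
  have hm: "(\<lambda>Z. Hker k l Z (p!0) (p!1) (p!2) (p!3)) \<in> borel_measurable (PiM {1..n} (\<lambda>_. M))"
    if "p \<in> dtuples 4 {1..n}" for p
    by (rule Hker_meas[OF K L]) (use dt_nth[OF that] in auto)
  have hm2: "(\<lambda>Z. Hker k l Z (p!0) (t!0) (t!1) (t!2)) \<in> borel_measurable (PiM {1..n} (\<lambda>_. M))"
    if "p \<in> dtuples 4 {1..n}" "t \<in> dtuples 3 ({1..n} - {p!0})" for p t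
  proof (rule Hker_meas[OF K L])
    have "set t \<subseteq> {1..n}" "length t = 3" using that(2) by (auto simp: dtuples_def)
    then have "t!0 \<in> {1..n}" "t!1 \<in> {1..n}" "t!2 \<in> {1..n}" using nth_mem[of _ t] by (auto simp del: atLeastAtMost_iff)
    then show "{p!0, t!0, t!1, t!2} \<subseteq> {1..n}" using dt_nth[OF that(1), of 0] by (simp del: atLeastAtMost_iff)
  qed
  show ?thesis
    unfolding sigma2_hat_def eta_hat_def
    by (intro borel_measurable_times borel_measurable_const borel_measurable_sum borel_measurable_power
        borel_measurable_diff hm hm2)
qed

theorem lemma8:
  fixes M :: "('x \<times> 'y) measure"
    and k :: "'x \<Rightarrow> 'x \<Rightarrow> real" and l :: "'y \<Rightarrow> 'y \<Rightarrow> real"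
    and \<nu>k \<nu>l \<delta> :: real and n :: nat
  assumes "prob_space M"
    and "pd_kernel k" and "pd_kernel l"
    and "(\<lambda>(z, z'). k (fst z) (fst z')) \<in> borel_measurable (M \<Otimes>\<^sub>M M)"
    and "(\<lambda>(z, z'). l (snd z) (snd z')) \<in> borel_measurable (M \<Otimes>\<^sub>M M)"
    and "\<forall>x. k x x \<le> \<nu>k" and "\<forall>y. l y y \<le> \<nu>l"
    and "4 \<le> n" and "0 < \<delta>" and "\<delta> < 1"
  shows "prob_space.prob (\<Pi>\<^sub>M i\<in>{1..n}. M)
           {Z \<in> space (\<Pi>\<^sub>M i\<in>{1..n}. M).
              \<bar>sigma2_hat k l n Z - prob_space.expectation (\<Pi>\<^sub>M i\<in>{1..n}. M) (sigma2_hat k l n)\<bar>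
                \<le> 6144 * \<nu>k\<^sup>2 * \<nu>l\<^sup>2 * sqrt (2 / real n * ln (2 / \<delta>))}
         \<ge> 1 - \<delta>"
proof -
  note M = assms(1)
  define P where "P = (\<Pi>\<^sub>M i\<in>{1..n}. M)"
  interpret P: prob_space P unfolding P_def by (rule prob_space_PiM) (rule M)
  define f where "f = sigma2_hat k l n"
  define Hb where "Hb = 4 * \<nu>k * \<nu>l"
  define T where "T = 6144 * \<nu>k\<^sup>2 * \<nu>l\<^sup>2 * sqrt (2 / real n * ln (2 / \<delta>))"
  have nk: "0 \<le> \<nu>k" using pd_diag[OF assms(2), of undefined] assms(6) by (metis order.trans)
  have nl: "0 \<le> \<nu>l" using pd_diag[OF assms(3), of undefined] assms(7) by (metis order.trans)
  have Hb0: "0 \<le> Hb" using nk nl by (simp add: Hb_def)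
  have HB: "\<And>Z i j q r. distinct [i,j,q,r] \<Longrightarrow> \<bar>Hker k l Z i j q r\<bar> \<le> Hb"
    unfolding Hb_def by (rule Hker_bound[OF assms(2,3,6,7)])
  have HL: "\<And>Z m y i j q r. m \<notin> {i,j,q,r} \<Longrightarrow> Hker k l (Z(m:=y)) i j q r = Hker k l Z i j q r"
    by (rule Hker_local)
  have fmeas: "f \<in> borel_measurable P" unfolding f_def P_def by (rule sigma_meas[OF assms(4,5)])
  have fbnd: "\<bar>f Z\<bar> \<le> 32 * Hb\<^sup>2" for Z unfolding f_def by (rule sigma_bnd[OF assms(8) Hb0 HB])
  have fbd: "\<bar>f Z - f (Z(m:=y))\<bar> \<le> 512 * Hb\<^sup>2 / n" if "m \<in> {1..n}" for Z m y
    unfolding f_def by (rule sigma_diff[OF assms(8) Hb0 HB HL that])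
  define A where "A = {Z \<in> space P. \<bar>f Z - (\<integral>Z. f Z \<partial>P)\<bar> \<le> T}"
  have goal: "1 - \<delta> \<le> measure P A"
  proof (cases "Hb = 0")
    case True
    then have f0: "f Z = 0" for Z using fbnd[of Z] by simp
    have T0: "0 \<le> T" unfolding T_def using assms(9,10) by simp
    have fz: "f = (\<lambda>_. 0)" using f0 by (intro ext) simp
    have "A = space P" unfolding A_def using T0 by (simp add: fz)
    then show ?thesis using assms(9) by (simp add: P.prob_space)
  next
    case False
    then have Hbp: "0 < Hb" using Hb0 by simp
    define c where "c = 512 * Hb\<^sup>2 / n"
    have n0: "0 < real n" using assms(8) by simp
    have cp: "0 < c" unfolding c_def using Hbp n0 by simp
    define L where "L = ln (2 / \<delta>)"
    have Lp: "0 < L" unfolding L_def using assms(9,10) by simp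
    have Tp: "0 < T"
    proof -
      have "\<nu>k \<noteq> 0" "\<nu>l \<noteq> 0" using Hbp by (auto simp: Hb_def)
      then have "0 < \<nu>k" "0 < \<nu>l" using nk nl by auto
      then show ?thesis unfolding T_def using Lp n0 by (simp add: L_def)
    qed
    have tail: "measure P {Z \<in> space P. T \<le> \<bar>f Z - (\<integral>Z. f Z \<partial>P)\<bar>} \<le> 2 * exp (-2 * T\<^sup>2 / (card {1..n} * c\<^sup>2))"
      unfolding P_def
    proof (rule mcd_two[OF M _ _ Tp cp])
      show "f \<in> borel_measurable (Pi\<^sub>M {1..n} (\<lambda>_. M))" using fmeas by (simp add: P_def)
      show "\<bar>f x\<bar> \<le> 32 * Hb\<^sup>2" for x by (rule fbnd)
      show "\<bar>f x - f (x(i := y))\<bar> \<le> c" if "i \<in> {1..n}" for x i y unfolding c_def by (rule fbd[OF that])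
    qed (use assms(8) in auto)
    have ex: "-2 * T\<^sup>2 / (card {1..n} * c\<^sup>2) = - (9/4) * L"
    proof -
      define V where "V = \<nu>k\<^sup>2 * \<nu>l\<^sup>2"
      have Vp: "0 < V"
      proof -
        have "\<nu>k * \<nu>l \<noteq> 0" using Hbp by (auto simp: Hb_def)
        then have "0 < (\<nu>k * \<nu>l)\<^sup>2" by simp
        then show ?thesis by (simp add: power_mult_distrib V_def)
      qed
      have sq: "(sqrt (2 / real n * L))\<^sup>2 = 2 / real n * L" using Lp n0 by simp
      have e1: "2 * T\<^sup>2 = 150994944 * V\<^sup>2 * L / n"
      proof -
        have "T = 6144 * V * sqrt (2 / real n * L)" unfolding T_def V_def L_def by simp
        then have "T\<^sup>2 = 6144\<^sup>2 * V\<^sup>2 * (sqrt (2 / real n * L))\<^sup>2" by (simp add: power_mult_distrib)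
        then show ?thesis unfolding sq by simp
      qed
      have e2: "real (card {1..n}) * c\<^sup>2 = 67108864 * V\<^sup>2 / n"
      proof -
        have "c = 8192 * V / n" unfolding c_def Hb_def V_def by (simp add: power_mult_distrib)
        then have "c\<^sup>2 = 8192\<^sup>2 * V\<^sup>2 / (real n)\<^sup>2" by (simp add: power_mult_distrib power_divide)
        then show ?thesis using n0 by (simp add: power2_eq_square)
      qed
      have "-2 * T\<^sup>2 / (card {1..n} * c\<^sup>2) = - ((2 * T\<^sup>2) / (real (card {1..n}) * c\<^sup>2))" by simp
      also have "\<dots> = - ((150994944 * V\<^sup>2 * L / n) / (67108864 * V\<^sup>2 / n))" unfolding e1 e2 ..
      also have "\<dots> = - (9/4) * L" using Vp n0 by (simp add: field_simps)
      finally show ?thesis .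
    qed
    have "exp (- (9/4) * L) \<le> exp (- L)" using Lp by simp
    also have "exp (- L) = \<delta> / 2" unfolding L_def using assms(9) by (simp add: exp_minus)
    finally have bnd: "2 * exp (-2 * T\<^sup>2 / (card {1..n} * c\<^sup>2)) \<le> \<delta>" unfolding ex by simp
    have Am: "A \<in> sets P" unfolding A_def using fmeas by measurable
    have Bm: "{Z \<in> space P. T \<le> \<bar>f Z - (\<integral>Z. f Z \<partial>P)\<bar>} \<in> sets P" using fmeas by measurable
    have "space P - A \<subseteq> {Z \<in> space P. T \<le> \<bar>f Z - (\<integral>Z. f Z \<partial>P)\<bar>}" unfolding A_def by auto
    then have "measure P (space P - A) \<le> measure P {Z \<in> space P. T \<le> \<bar>f Z - (\<integral>Z. f Z \<partial>P)\<bar>}"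
      using Bm by (intro P.finite_measure_mono) auto
    also have "\<dots> \<le> \<delta>" using tail bnd by linarith
    finally have "measure P (space P - A) \<le> \<delta>" .
    moreover have "measure P (space P - A) = 1 - measure P A" using Am by (rule P.prob_compl)
    ultimately show ?thesis by linarith
  qed
  then show ?thesis unfolding A_def f_def T_def P_def .
qed

end
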